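(* Let $G=(V,E)$ be a graph, $a$ a positive integer, and $V_D'\subseteq V$. Let $S_1,\dots,S_k$ be pairwise disjoint nonempty vertex sets such that, for every $u\in V_D'$, either $N^a(u)\subseteq S_i$ for some $i\in\{1,\dots,k\}$, or $N^a(u)\cap(S_1\cup\cdots\cup S_k)=\emptyset$. Let $$S=\{v\in V:\operatorname{dist}(v,S_1\cup\cdots\cup S_k)\le a\}.$$ If $G[S]$ is connected, then: 1. $N_S=\sum_{i=1}^k N_{S_i}$; 2. $D_S\le-1+\sum_{i=1}^k(D_{S_i}+2a+1)$.
   Context: $\operatorname{dist}$ is the shortest-path distance in $G$; $\operatorname{dist}(u,X)=\min_{x\in X}\operatorname{dist}(u,x)$; $N^r(v)=\{u:\operatorname{dist}(u,v)\le r\}$. For a vertex set $X$ (with $V_D'$ and $a$ fixed): - $N_X$ is the maximum size of a subset $X^*\subseteq X\cap V_D'$ such that $\operatorname{dist}(u,v)>2a$ for every pair of distinct $u,v\in X^*$; - $D_X$ is the diameter of the induced subgraph $G[X]$ (equal to $\infty$ if $G[X]$ is disconnected). *)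

theory Defs
  imports Main "HOL-Library.Extended_Nat"
begin

definition graph :: "'a set \<Rightarrow> ('a \<Rightarrow> 'a \<Rightarrow> bool) \<Rightarrow> bool" where
  "graph V E \<longleftrightarrow> finite V \<and> (\<forall>u v. E u v \<longrightarrow> u \<in> V \<and> v \<in> V)
     \<and> (\<forall>u v. E u v \<longrightarrow> E v u) \<and> (\<forall>u. \<not> E u u)"

definition walk_in :: "'a set \<Rightarrow> ('a \<Rightarrow> 'a \<Rightarrow> bool) \<Rightarrow> 'a list \<Rightarrow> bool" where
  "walk_in X E xs \<longleftrightarrow> xs \<noteq> [] \<and> set xs \<subseteq> X
     \<and> (\<forall>i < length xs - 1. E (xs ! i) (xs ! Suc i))"

text \<open>Shortest-path distance in the induced subgraph G[X] (\<infinity> if no path).\<close>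
definition dist_in :: "'a set \<Rightarrow> ('a \<Rightarrow> 'a \<Rightarrow> bool) \<Rightarrow> 'a \<Rightarrow> 'a \<Rightarrow> enat" where
  "dist_in X E u v =
     (INF xs \<in> {xs. walk_in X E xs \<and> hd xs = u \<and> last xs = v}. enat (length xs - 1))"

definition set_dist :: "'a set \<Rightarrow> ('a \<Rightarrow> 'a \<Rightarrow> bool) \<Rightarrow> 'a \<Rightarrow> 'a set \<Rightarrow> enat" where
  "set_dist V E u X = (INF x \<in> X. dist_in V E u x)"

definition nbhd :: "'a set \<Rightarrow> ('a \<Rightarrow> 'a \<Rightarrow> bool) \<Rightarrow> nat \<Rightarrow> 'a \<Rightarrow> 'a set" where
  "nbhd V E r v = {u. dist_in V E u v \<le> enat r}"

text \<open>N_X: maximum size of a subset of X \<inter> V_D' whose points are pairwise at distance > 2a.\<close>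
definition pack_num :: "'a set \<Rightarrow> ('a \<Rightarrow> 'a \<Rightarrow> bool) \<Rightarrow> 'a set \<Rightarrow> nat \<Rightarrow> 'a set \<Rightarrow> nat" where
  "pack_num V E VD a X = Max {card Y | Y. Y \<subseteq> X \<inter> VD \<and>
      (\<forall>u \<in> Y. \<forall>v \<in> Y. u \<noteq> v \<longrightarrow> dist_in V E u v > enat (2 * a))}"

text \<open>D_X: diameter of G[X] (\<infinity> if G[X] is disconnected).\<close>
definition diam :: "('a \<Rightarrow> 'a \<Rightarrow> bool) \<Rightarrow> 'a set \<Rightarrow> enat" where
  "diam E X = (SUP u \<in> X. SUP v \<in> X. dist_in X E u v)"

definition connected_in :: "('a \<Rightarrow> 'a \<Rightarrow> bool) \<Rightarrow> 'a set \<Rightarrow> bool" where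
  "connected_in E X \<longleftrightarrow> X \<noteq> {} \<and> (\<forall>u \<in> X. \<forall>v \<in> X. dist_in X E u v < \<infinity>)"

end

theory Submission
  imports Defs
begin


lemma walk_alt: "walk_in X E xs \<longleftrightarrow> xs \<noteq> [] \<and> set xs \<subseteq> X \<and> successively E xs"
  unfolding walk_in_def successively_conv_nth
  by (simp add: less_diff_conv)

lemma walk_dist: "walk_in X E xs \<Longrightarrow> dist_in X E (hd xs) (last xs) \<le> enat (length xs - 1)"
  unfolding dist_in_def by (rule INF_lower) auto

lemma dist_obtain:
  assumes "dist_in X E u v = enat n"
  obtains xs where "walk_in X E xs" "hd xs = u" "last xs = v" "length xs - 1 = n"
proof -
  let ?A = "{xs. walk_in X E xs \<and> hd xs = u \<and> last xs = v}"
  let ?f = "\<lambda>xs. enat (length xs - 1)"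
  have ne: "?f ` ?A \<noteq> {}"
  proof
    assume e: "?f ` ?A = {}"
    have "dist_in X E u v = \<infinity>" unfolding dist_in_def Inf_enat_def if_P[OF e] ..
    with assms show False by simp
  qed
  have "dist_in X E u v = (LEAST x. x \<in> ?f ` ?A)" unfolding dist_in_def Inf_enat_def if_not_P[OF ne] ..
  moreover have "(LEAST x. x \<in> ?f ` ?A) \<in> ?f ` ?A" by (rule LeastI_ex) (use ne in blast)
  ultimately have "dist_in X E u v \<in> ?f ` ?A" by simp
  then obtain xs where "xs \<in> ?A" "dist_in X E u v = ?f xs" by blast
  then show ?thesis using that[of xs] assms by simp
qed

lemma dist_fin_obtain:
  assumes "dist_in X E u v < \<infinity>"
  shows "\<exists>xs. walk_in X E xs \<and> hd xs = u \<and> last xs = v \<and> enat (length xs - 1) = dist_in X E u v"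
proof -
  obtain n where n: "dist_in X E u v = enat n" using assms less_infinityE by blast
  obtain xs where xs: "walk_in X E xs" "hd xs = u" "last xs = v" "length xs - 1 = n"
    by (rule dist_obtain[OF n])
  show ?thesis apply (rule exI[of _ xs]) using xs n by simp
qed

lemma dist_refl: "u \<in> X \<Longrightarrow> dist_in X E u u = 0"
  using walk_dist[of X E "[u]"] by (simp add: walk_in_def zero_enat_def[symmetric])

lemma dist_edge: "u \<in> X \<Longrightarrow> v \<in> X \<Longrightarrow> E u v \<Longrightarrow> dist_in X E u v \<le> 1"
  using walk_dist[of X E "[u,v]"] by (simp add: walk_alt one_enat_def)

lemma dist_mono: "X \<subseteq> Y \<Longrightarrow> dist_in Y E u v \<le> dist_in X E u v"
  unfolding dist_in_def walk_in_def by (rule INF_superset_mono) auto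

lemma dist_sym:
  assumes "\<forall>u v. E u v \<longrightarrow> E v u"
  shows "dist_in X E u v \<le> dist_in X E v u"
proof (cases "dist_in X E v u")
  case (enat n)
  obtain xs where xs: "walk_in X E xs" "hd xs = v" "last xs = u" "length xs - 1 = n"
    by (rule dist_obtain[OF enat])
  have "walk_in X E (rev xs)" using xs(1) assms unfolding walk_alt
    by (simp add: successively_mono[of E xs])
  from walk_dist[OF this] xs enat show ?thesis by (simp add: hd_rev last_rev)
qed simp

lemma dist_sym_eq:
  assumes "\<forall>u v. E u v \<longrightarrow> E v u"
  shows "dist_in X E u v = dist_in X E v u"
  by (rule order_antisym) (rule dist_sym[OF assms])+

lemma dist_trans: "dist_in X E u w \<le> dist_in X E u v + dist_in X E v w"
proof (cases "dist_in X E u v")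
  case (enat n)
  show ?thesis
  proof (cases "dist_in X E v w")
    case (enat m)
    obtain xs where xs: "walk_in X E xs" "hd xs = u" "last xs = v" "length xs - 1 = n"
      by (rule dist_obtain[OF \<open>dist_in X E u v = enat n\<close>])
    obtain ys where ys: "walk_in X E ys" "hd ys = v" "last ys = w" "length ys - 1 = m"
      by (rule dist_obtain[OF enat])
    have xs2: "xs = butlast xs @ [v]" using xs append_butlast_last_id[of xs] by (simp add: walk_alt)
    have ys2: "ys = v # tl ys" using ys hd_Cons_tl[of ys] by (simp add: walk_alt)
    have "successively E xs" "successively E ys" using xs ys by (simp_all add: walk_alt)
    then have s1: "successively E (butlast xs)" "butlast xs = [] \<or> E (last (butlast xs)) v"
      using xs2 successively_append_iff[of E "butlast xs" "[v]"] \<open>successively E xs\<close> by simp_all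
    have "successively E (butlast xs @ ys)" unfolding successively_append_iff
      using s1 \<open>successively E ys\<close> ys by blast
    then have w: "walk_in X E (butlast xs @ ys)" using xs ys ys2 unfolding walk_alt
      by (auto dest: in_set_butlastD)
    have l: "length (butlast xs @ ys) - 1 = n + m" using xs ys
      by (cases ys) (auto simp: walk_alt)
    have h: "hd (butlast xs @ ys) = u"
    proof (cases "butlast xs = []")
      case True
      then have "xs = [v]" using xs2 by simp
      then show ?thesis using True xs ys by simp
    next
      case False
      then show ?thesis using xs xs2 by (metis hd_append2 hd_append)
    qed
    have "last (butlast xs @ ys) = w" using ys by (simp add: walk_alt)
    with walk_dist[OF w] l h have "dist_in X E u w \<le> enat (n + m)" by simp
    then show ?thesis using enat \<open>dist_in X E u v = enat n\<close> by simp
  qed simp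
qed simp



lemma walk_drop:
  assumes "walk_in X E xs" "p < length xs"
  shows "walk_in X E (drop p xs)"
proof -
  have "successively E (take p xs @ drop p xs)" using assms by (simp add: walk_alt)
  then have "successively E (drop p xs)" by (simp only: successively_append_iff)
  then show ?thesis using assms by (auto simp: walk_alt dest: in_set_dropD)
qed

lemma walk_take:
  assumes "walk_in X E xs" "p < length xs"
  shows "walk_in X E (take (Suc p) xs)"
proof -
  have "successively E (take (Suc p) xs @ drop (Suc p) xs)" using assms by (simp add: walk_alt)
  then have "successively E (take (Suc p) xs)" by (simp only: successively_append_iff)
  then show ?thesis using assms by (auto simp: walk_alt dest: in_set_takeD)
qed

lemma walk_split:
  assumes "walk_in X E xs" "p < length xs"
  shows "dist_in X E (hd xs) (xs ! p) \<le> enat p"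
    and "dist_in X E (xs ! p) (last xs) \<le> enat (length xs - 1 - p)"
proof -
  have "dist_in X E (hd (take (Suc p) xs)) (last (take (Suc p) xs)) \<le> enat (length (take (Suc p) xs) - 1)"
    by (rule walk_dist[OF walk_take[OF assms]])
  moreover have "hd (take (Suc p) xs) = hd xs" using assms by (simp add: walk_alt hd_take)
  moreover have "last (take (Suc p) xs) = xs ! p" using assms
    by (simp add: take_Suc_conv_app_nth)
  ultimately show "dist_in X E (hd xs) (xs ! p) \<le> enat p" using assms by simp
  have "dist_in X E (hd (drop p xs)) (last (drop p xs)) \<le> enat (length (drop p xs) - 1)"
    by (rule walk_dist[OF walk_drop[OF assms]])
  moreover have "hd (drop p xs) = xs ! p" using assms by (simp add: hd_drop_conv_nth)
  moreover have "last (drop p xs) = last xs" using assms by simp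
  ultimately show "dist_in X E (xs ! p) (last xs) \<le> enat (length xs - 1 - p)" by simp
qed

lemma midpoint:
  assumes "dist_in X E u v \<le> enat (a + b)"
  shows "\<exists>w. dist_in X E u w \<le> enat a \<and> dist_in X E w v \<le> enat b"
proof -
  obtain n where n: "dist_in X E u v = enat n" using assms by (cases "dist_in X E u v") auto
  obtain xs where xs: "walk_in X E xs" "hd xs = u" "last xs = v" "length xs - 1 = n"
    by (rule dist_obtain[OF n])
  have nab: "n \<le> a + b" using assms n by simp
  let ?p = "min a n"
  have p: "?p < length xs" using xs by (cases xs) (auto simp: walk_alt)
  have "dist_in X E u (xs ! ?p) \<le> enat ?p" using walk_split(1)[OF xs(1) p] xs by simp
  also have "\<dots> \<le> enat a" by simp
  finally have 1: "dist_in X E u (xs ! ?p) \<le> enat a" .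
  have "dist_in X E (xs ! ?p) v \<le> enat (length xs - 1 - ?p)" using walk_split(2)[OF xs(1) p] xs(3) by simp
  also have "\<dots> \<le> enat b" using xs nab by simp
  finally show ?thesis using 1 by blast
qed

lemma discrete_step:
  "P (f 0) \<Longrightarrow> \<not> P (f n) \<Longrightarrow> \<exists>i<n. P (f i) \<and> \<not> P (f (Suc i))"
proof (induction n)
  case 0 then show ?case by simp
next
  case (Suc n)
  show ?case
  proof (cases "P (f n)")
    case True then show ?thesis using Suc.prems by blast
  next
    case False
    then obtain i where "i < n" "P (f i) \<and> \<not> P (f (Suc i))" using Suc by blast
    then show ?thesis using less_SucI by blast
  qed
qed

lemma set_dist_le:
  assumes "set_dist V E v T \<le> enat a"
  shows "\<exists>x\<in>T. dist_in V E v x \<le> enat a"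
proof (rule ccontr)
  assume "\<not> ?thesis"
  then have "\<forall>x\<in>T. enat (Suc a) \<le> dist_in V E v x"
    by (metis enat_ord_simps(2) ileI1 eSuc_enat linorder_not_le)
  then have "enat (Suc a) \<le> set_dist V E v T" unfolding set_dist_def by (auto intro: INF_greatest)
  from order_trans[OF this assms] show False by simp
qed

lemma set_dist_ge:
  assumes "x \<in> T" "dist_in V E v x \<le> enat a"
  shows "set_dist V E v T \<le> enat a"
  unfolding set_dist_def using assms by (rule INF_lower2)

lemma path_in_S:
  assumes "x \<in> T" "dist_in V E v x \<le> enat a"
    and S: "S = {v \<in> V. set_dist V E v T \<le> enat a}"
  shows "dist_in S E v x \<le> dist_in V E v x"
proof -
  obtain n where n: "dist_in V E v x = enat n" using assms by (cases "dist_in V E v x") auto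
  obtain xs where xs: "walk_in V E xs" "hd xs = v" "last xs = x" "length xs - 1 = n"
    by (rule dist_obtain[OF n])
  have "set xs \<subseteq> S"
  proof
    fix y assume "y \<in> set xs"
    then obtain p where p: "p < length xs" "y = xs ! p" by (auto simp: in_set_conv_nth)
    have "dist_in V E y x \<le> enat (length xs - 1 - p)" using walk_split(2)[OF xs(1) p(1)] p xs by (simp only:)
    also have "\<dots> \<le> enat a" using xs n assms(2) by simp
    finally have "set_dist V E y T \<le> enat a" by (rule set_dist_ge[OF assms(1)])
    moreover have "y \<in> V" using xs(1) p by (auto simp: walk_alt)
    ultimately show "y \<in> S" using S by simp
  qed
  then have "walk_in S E xs" using xs by (simp add: walk_alt)
  from walk_dist[OF this] xs n show ?thesis by simp
qed



definition pk where "pk V E a Y \<longleftrightarrow> (\<forall>u \<in> Y. \<forall>v \<in> Y. u \<noteq> v \<longrightarrow> dist_in V E u v > enat (2 * a))"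

lemma pack_set_eq: "{card Y | Y. Y \<subseteq> X \<inter> VD \<and>
      (\<forall>u \<in> Y. \<forall>v \<in> Y. u \<noteq> v \<longrightarrow> dist_in V E u v > enat (2 * a))} = card ` {Y. Y \<subseteq> X \<inter> VD \<and> pk V E a Y}"
  unfolding pk_def by blast

lemma pack_fin: "finite VD \<Longrightarrow> finite (card ` {Y. Y \<subseteq> X \<inter> VD \<and> pk V E a Y})"
proof -
  assume f: "finite VD"
  have "{Y. Y \<subseteq> X \<inter> VD \<and> pk V E a Y} \<subseteq> Pow VD" by blast
  moreover have "finite (Pow VD)" using f by simp
  ultimately have "finite {Y. Y \<subseteq> X \<inter> VD \<and> pk V E a Y}" by (rule finite_subset)
  then show ?thesis by (rule finite_imageI)
qed

lemma pack_ne: "card ` {Y. Y \<subseteq> X \<inter> VD \<and> pk V E a Y} \<noteq> {}"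
proof -
  have "{} \<in> {Y. Y \<subseteq> X \<inter> VD \<and> pk V E a Y}" by (simp add: pk_def)
  then show ?thesis by blast
qed

lemma pack_alt: "pack_num V E VD a X = Max (card ` {Y. Y \<subseteq> X \<inter> VD \<and> pk V E a Y})"
  unfolding pack_num_def pack_set_eq ..

lemma pack_ge: "finite VD \<Longrightarrow> Y \<subseteq> X \<inter> VD \<Longrightarrow> pk V E a Y \<Longrightarrow> card Y \<le> pack_num V E VD a X"
proof -
  assume a: "finite VD" "Y \<subseteq> X \<inter> VD" "pk V E a Y"
  have "card Y \<in> card ` {Y. Y \<subseteq> X \<inter> VD \<and> pk V E a Y}" using a(2,3) by blast
  with pack_fin[OF a(1)] show ?thesis unfolding pack_alt by (rule Max_ge)
qed

lemma pack_obtain: "finite VD \<Longrightarrow> \<exists>Y. Y \<subseteq> X \<inter> VD \<and> pk V E a Y \<and> card Y = pack_num V E VD a X"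
proof -
  assume f: "finite VD"
  have "pack_num V E VD a X \<in> card ` {Y. Y \<subseteq> X \<inter> VD \<and> pk V E a Y}"
    unfolding pack_alt by (rule Max_in[OF pack_fin[OF f] pack_ne])
  then obtain Y where Y: "Y \<in> {Y. Y \<subseteq> X \<inter> VD \<and> pk V E a Y}" "pack_num V E VD a X = card Y"
    by (rule imageE)
  show ?thesis apply (rule exI[of _ Y]) using Y by simp
qed


lemma part1:
  fixes V :: "'a set" and E :: "'a \<Rightarrow> 'a \<Rightarrow> bool" and a k :: nat
    and VD :: "'a set" and Ss :: "nat \<Rightarrow> 'a set"
  assumes G: "graph V E"
    and VD_sub: "VD \<subseteq> V"
    and Ss_sub: "\<forall>i \<in> {1..k}. Ss i \<subseteq> V"
    and Ss_disj: "\<forall>i \<in> {1..k}. \<forall>j \<in> {1..k}. i \<noteq> j \<longrightarrow> Ss i \<inter> Ss j = {}"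
    and sep: "\<forall>u \<in> VD. (\<exists>i \<in> {1..k}. nbhd V E a u \<subseteq> Ss i)
                  \<or> nbhd V E a u \<inter> (\<Union>i \<in> {1..k}. Ss i) = {}"
    and S_def: "S = {v \<in> V. set_dist V E v (\<Union>i \<in> {1..k}. Ss i) \<le> enat a}"
  shows "pack_num V E VD a S = (\<Sum>i = 1..k. pack_num V E VD a (Ss i))"
proof -
  have sym: "\<forall>u v. E u v \<longrightarrow> E v u" using G unfolding graph_def by blast
  have finV: "finite V" using G unfolding graph_def by blast
  have finVD: "finite VD" using finite_subset[OF VD_sub finV] .
  have inSs: "w \<in> Ss i" if u: "u \<in> VD" "i \<in> {1..k}" "u \<in> Ss i" and w: "dist_in V E w u \<le> enat a" for u w i
  proof -
    have uV: "u \<in> V" using u VD_sub by blast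
    have "u \<in> nbhd V E a u" unfolding nbhd_def using dist_refl[OF uV, of E] by (simp add: zero_enat_def)
    then have "nbhd V E a u \<inter> (\<Union>i \<in> {1..k}. Ss i) \<noteq> {}" using u by blast
    then obtain j where j: "j \<in> {1..k}" "nbhd V E a u \<subseteq> Ss j" using sep u(1) by blast
    have "u \<in> Ss j" using j \<open>u \<in> nbhd V E a u\<close> by blast
    then have "j = i" using Ss_disj j(1) u(2,3) by blast
    moreover have "w \<in> nbhd V E a u" unfolding nbhd_def using w by simp
    ultimately show ?thesis using j by blast
  qed
  have cross: "dist_in V E u v > enat (2 * a)"
    if "u \<in> Ss i \<inter> VD" "v \<in> Ss j \<inter> VD" "i \<in> {1..k}" "j \<in> {1..k}" "i \<noteq> j" for u v i j
  proof (rule ccontr)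
    assume "\<not> ?thesis"
    then have "dist_in V E u v \<le> enat (a + a)" by (simp add: mult_2)
    then obtain w where w: "dist_in V E u w \<le> enat a" "dist_in V E w v \<le> enat a"
      using midpoint[OF \<open>dist_in V E u v \<le> enat (a + a)\<close>] by blast
    have "dist_in V E w u \<le> enat a" using w(1) dist_sym_eq[OF sym, of V u w] by simp
    then have "w \<in> Ss i" using inSs[of u i w] that by blast
    moreover have "w \<in> Ss j" using inSs[of v j w] that w(2) by blast
    ultimately show False using Ss_disj that by blast
  qed
  have SVD: "S \<inter> VD = (\<Union>i \<in> {1..k}. Ss i \<inter> VD)"
  proof
    show "S \<inter> VD \<subseteq> (\<Union>i \<in> {1..k}. Ss i \<inter> VD)"
    proof
      fix u assume u: "u \<in> S \<inter> VD"
      then have "set_dist V E u (\<Union>i \<in> {1..k}. Ss i) \<le> enat a" using S_def by blast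
      then obtain x where x: "x \<in> (\<Union>i \<in> {1..k}. Ss i)" "dist_in V E u x \<le> enat a"
        using set_dist_le[OF \<open>set_dist V E u (\<Union>i \<in> {1..k}. Ss i) \<le> enat a\<close>] by blast
      obtain i where i: "i \<in> {1..k}" "x \<in> Ss i" using x(1) by blast
      have "dist_in V E x u \<le> enat a" using x(2) dist_sym_eq[OF sym, of V u x] by simp
      then have "x \<in> nbhd V E a u" unfolding nbhd_def by simp
      then have "nbhd V E a u \<inter> (\<Union>i \<in> {1..k}. Ss i) \<noteq> {}" using x(1) by blast
      then obtain j where j: "j \<in> {1..k}" "nbhd V E a u \<subseteq> Ss j" using sep u by blast
      have uV: "u \<in> V" using u VD_sub by blast
      have "u \<in> nbhd V E a u" unfolding nbhd_def using dist_refl[OF uV, of E] by (simp add: zero_enat_def)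
      then show "u \<in> (\<Union>i \<in> {1..k}. Ss i \<inter> VD)" using j u by blast
    qed
  next
    show "(\<Union>i \<in> {1..k}. Ss i \<inter> VD) \<subseteq> S \<inter> VD"
    proof
      fix u assume "u \<in> (\<Union>i \<in> {1..k}. Ss i \<inter> VD)"
      then obtain i where i: "i \<in> {1..k}" "u \<in> Ss i" "u \<in> VD" by blast
      have uV: "u \<in> V" using i VD_sub by blast
      have "u \<in> (\<Union>i \<in> {1..k}. Ss i)" using i by blast
      moreover have "dist_in V E u u \<le> enat a" using dist_refl[OF uV, of E] by (simp add: zero_enat_def)
      ultimately have "set_dist V E u (\<Union>i \<in> {1..k}. Ss i) \<le> enat a"
        by (rule set_dist_ge)
      then show "u \<in> S \<inter> VD" using S_def uV i by blast
    qed
  qed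
  show ?thesis
  proof (rule order_antisym)
    from pack_obtain[OF finVD, of S V E a] obtain Y where Y0: "Y \<subseteq> S \<inter> VD \<and> pk V E a Y \<and> card Y = pack_num V E VD a S" ..
    then have Y: "Y \<subseteq> S \<inter> VD" "pk V E a Y" "card Y = pack_num V E VD a S" by simp_all
    have finY: "finite Y" using finite_subset[OF Y(1)] finVD by blast
    have "Y = (\<Union>i \<in> {1..k}. Y \<inter> Ss i)" using Y(1) SVD by blast
    then have "card Y = (\<Sum>i = 1..k. card (Y \<inter> Ss i))"
      using card_UN_disjoint[of "{1..k}" "\<lambda>i. Y \<inter> Ss i"] finY Ss_disj by (simp add: Int_assoc) blast
    also have "\<dots> \<le> (\<Sum>i = 1..k. pack_num V E VD a (Ss i))"
    proof (rule sum_mono)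
      fix i assume i: "i \<in> {1..k}"
      show "card (Y \<inter> Ss i) \<le> pack_num V E VD a (Ss i)"
      proof (rule pack_ge[OF finVD])
        show "Y \<inter> Ss i \<subseteq> Ss i \<inter> VD" using Y(1) by blast
        show "pk V E a (Y \<inter> Ss i)" using Y(2) unfolding pk_def by blast
      qed
    qed
    finally show "pack_num V E VD a S \<le> (\<Sum>i = 1..k. pack_num V E VD a (Ss i))" using Y(3) by simp
  next
    have "\<forall>i \<in> {1..k}. \<exists>Y. Y \<subseteq> Ss i \<inter> VD \<and> pk V E a Y \<and> card Y = pack_num V E VD a (Ss i)"
      using pack_obtain[OF finVD] by simp
    from bchoice[OF this] obtain Yf where Yf0: "\<forall>i\<in>{1..k}. Yf i \<subseteq> Ss i \<inter> VD \<and> pk V E a (Yf i) \<and> card (Yf i) = pack_num V E VD a (Ss i)" ..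
    have Yf: "\<And>i. i \<in> {1..k} \<Longrightarrow> Yf i \<subseteq> Ss i \<inter> VD \<and> pk V E a (Yf i) \<and> card (Yf i) = pack_num V E VD a (Ss i)"
      using Yf0 by blast
    let ?Y = "\<Union>i \<in> {1..k}. Yf i"
    have "(\<Sum>i = 1..k. pack_num V E VD a (Ss i)) = (\<Sum>i = 1..k. card (Yf i))"
      using Yf by simp
    also have "\<dots> = card ?Y"
    proof (rule card_UN_disjoint[symmetric])
      show "finite {1..k}" by simp
      show "\<forall>i\<in>{1..k}. finite (Yf i)" using Yf finVD finite_subset by (metis le_infE)
      show "\<forall>i\<in>{1..k}. \<forall>j\<in>{1..k}. i \<noteq> j \<longrightarrow> Yf i \<inter> Yf j = {}"
        using Yf Ss_disj by blast
    qed
    also have "\<dots> \<le> pack_num V E VD a S"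
    proof (rule pack_ge[OF finVD])
      show "?Y \<subseteq> S \<inter> VD" using Yf SVD by blast
      show "pk V E a ?Y" unfolding pk_def
      proof (intro ballI impI)
        fix u v assume uv: "u \<in> ?Y" "v \<in> ?Y" "u \<noteq> v"
        then obtain i j where ij: "i \<in> {1..k}" "j \<in> {1..k}" "u \<in> Yf i" "v \<in> Yf j" by blast
        show "enat (2 * a) < dist_in V E u v"
        proof (cases "i = j")
          case True
          then show ?thesis using Yf[OF ij(1)] ij uv(3) unfolding pk_def by blast
        next
          case False
          show ?thesis using cross[of u i v j] Yf[OF ij(1)] Yf[OF ij(2)] ij False by blast
        qed
      qed
    qed
    finally show "(\<Sum>i = 1..k. pack_num V E VD a (Ss i)) \<le> pack_num V E VD a S" .
  qed
qed



lemma part2: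
  fixes V :: "'a set" and E :: "'a \<Rightarrow> 'a \<Rightarrow> bool" and a k :: nat
    and Ss :: "nat \<Rightarrow> 'a set"
  assumes G: "graph V E"
    and Ss_sub: "\<forall>i \<in> {1..k}. Ss i \<subseteq> V"
    and Ss_ne: "\<forall>i \<in> {1..k}. Ss i \<noteq> {}"
    and S_def: "S = {v \<in> V. set_dist V E v (\<Union>i \<in> {1..k}. Ss i) \<le> enat a}"
    and conn: "connected_in E S"
  shows "diam E S + 1 \<le> (\<Sum>i = 1..k. diam E (Ss i) + enat (2 * a + 1))"
proof -
  have sym: "\<forall>u v. E u v \<longrightarrow> E v u" using G unfolding graph_def by blast
  define U where "U = (\<Union>i \<in> {1..k}. Ss i)"
  define Bs where "Bs p = {v \<in> V. \<exists>x \<in> Ss p. dist_in V E v x \<le> enat a}" for p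
  define W where "W J = (\<Sum>i\<in>J. diam E (Ss i) + enat (2 * a + 1))" for J
  define Q where "Q J \<longleftrightarrow> (\<forall>p\<in>J. \<forall>q\<in>J. \<forall>u\<in>Bs p. \<forall>v\<in>Bs q. dist_in S E u v + 1 \<le> W J)" for J
  have SU: "S = {v \<in> V. set_dist V E v U \<le> enat a}" using S_def U_def by simp
  have SsS: "Ss p \<subseteq> S" if "p \<in> {1..k}" for p
  proof
    fix x assume x: "x \<in> Ss p"
    have xV: "x \<in> V" using x that Ss_sub by blast
    have "x \<in> U" using x that U_def by blast
    moreover have "dist_in V E x x \<le> enat a" using dist_refl[OF xV, of E] by (simp add: zero_enat_def)
    ultimately have "set_dist V E x U \<le> enat a" by (rule set_dist_ge)
    then show "x \<in> S" using SU xV by simp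
  qed
  have SsB: "Ss p \<subseteq> Bs p" if "p \<in> {1..k}" for p
  proof
    fix x assume x: "x \<in> Ss p"
    have xV: "x \<in> V" using x that Ss_sub by blast
    have "dist_in V E x x \<le> enat a" using dist_refl[OF xV, of E] by (simp add: zero_enat_def)
    then show "x \<in> Bs p" unfolding Bs_def using x xV by blast
  qed
  have Bclose: "\<exists>x\<in>Ss p. dist_in S E u x \<le> enat a \<and> dist_in S E x u \<le> enat a"
    if p: "p \<in> {1..k}" and u: "u \<in> Bs p" for p u
  proof -
    obtain x where x: "x \<in> Ss p" "dist_in V E u x \<le> enat a" using u unfolding Bs_def by blast
    have "x \<in> U" using x p U_def by blast
    have "dist_in S E u x \<le> dist_in V E u x" by (rule path_in_S[OF \<open>x \<in> U\<close> x(2) SU])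
    then have "dist_in S E u x \<le> enat a" using x(2) by (rule order_trans)
    moreover then have "dist_in S E x u \<le> enat a" using dist_sym_eq[OF sym, of S u x] by simp
    ultimately show ?thesis using x(1) by blast
  qed
  have BS: "Bs p \<subseteq> S" if p: "p \<in> {1..k}" for p
  proof
    fix u assume u: "u \<in> Bs p"
    obtain x where x: "x \<in> Ss p" "dist_in V E u x \<le> enat a" using u unfolding Bs_def by blast
    have "x \<in> U" using x p U_def by blast
    then have "set_dist V E u U \<le> enat a" using x(2) by (rule set_dist_ge)
    moreover have "u \<in> V" using u unfolding Bs_def by blast
    ultimately show "u \<in> S" using SU by simp
  qed
  have SB: "\<exists>p\<in>{1..k}. u \<in> Bs p" if u: "u \<in> S" for u
  proof -
    have "set_dist V E u U \<le> enat a" "u \<in> V" using u SU by simp_all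
    from set_dist_le[OF this(1)] obtain x where x: "x \<in> U" "dist_in V E u x \<le> enat a" by blast
    then obtain p where "p \<in> {1..k}" "x \<in> Ss p" using U_def by blast
    then show ?thesis using x \<open>u \<in> V\<close> unfolding Bs_def by blast
  qed
  have Sdiam: "dist_in S E x y \<le> diam E (Ss p)" if p: "p \<in> {1..k}" and xy: "x \<in> Ss p" "y \<in> Ss p" for p x y
  proof -
    have "dist_in S E x y \<le> dist_in (Ss p) E x y" by (rule dist_mono[OF SsS[OF p]])
    also have "\<dots> \<le> (SUP v \<in> Ss p. dist_in (Ss p) E x v)" using xy(2) by (rule SUP_upper)
    also have "\<dots> \<le> diam E (Ss p)" unfolding diam_def using xy(1) by (rule SUP_upper)
    finally show ?thesis .
  qed
  have base: "dist_in S E u v + 1 \<le> diam E (Ss p) + enat (2 * a + 1)"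
    if p: "p \<in> {1..k}" and uv: "u \<in> Bs p" "v \<in> Bs p" for p u v
  proof -
    obtain x where x: "x \<in> Ss p" "dist_in S E u x \<le> enat a" using Bclose[OF p uv(1)] by blast
    obtain y where y: "y \<in> Ss p" "dist_in S E y v \<le> enat a" using Bclose[OF p uv(2)] by blast
    have "dist_in S E u v \<le> dist_in S E u x + dist_in S E x v" by (rule dist_trans)
    also have "\<dots> \<le> dist_in S E u x + (dist_in S E x y + dist_in S E y v)"
      by (rule add_left_mono[OF dist_trans])
    also have "\<dots> \<le> enat a + (diam E (Ss p) + enat a)"
      using x(2) y(2) Sdiam[OF p x(1) y(1)] by (intro add_mono) auto
    finally have "dist_in S E u v + 1 \<le> enat a + (diam E (Ss p) + enat a) + 1" by (rule add_right_mono)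
    also have "\<dots> = diam E (Ss p) + enat (2 * a + 1)"
      by (cases "diam E (Ss p)") (simp_all add: one_enat_def)
    finally show ?thesis .
  qed
  have Wmem: "diam E (Ss q) + enat (2 * a + 1) \<le> W J" if "finite J" "q \<in> J" for J q
    unfolding W_def by (rule member_le_sum[OF that(2) _ that(1)]) simp
  have Wmono: "W J \<le> W K" if "finite K" "J \<subseteq> K" for J K
    unfolding W_def by (rule sum_mono2[OF that]) simp
  have Wins: "W (insert q J) = diam E (Ss q) + enat (2 * a + 1) + W J" if "finite J" "q \<notin> J" for J q
    unfolding W_def using that by simp
  obtain u0 where u0: "u0 \<in> S" using conn unfolding connected_in_def by blast
  obtain p0 where p0: "p0 \<in> {1..k}" using SB[OF u0] by blast
  then have k1: "1 \<le> k" by simp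
  have step: "\<exists>J \<subseteq> {1..k}. card J = Suc n \<and> Q J" if "n < k" for n
    using that
  proof (induction n)
    case 0
    have "Q {1}" unfolding Q_def
    proof (intro ballI)
      fix p q u v assume "p \<in> {1}" "q \<in> {1}" "u \<in> Bs p" "v \<in> Bs q"
      then have "u \<in> Bs 1" "v \<in> Bs 1" by simp_all
      from base[OF _ this] k1 have "dist_in S E u v + 1 \<le> diam E (Ss 1) + enat (2 * a + 1)" by simp
      then show "dist_in S E u v + 1 \<le> W {1}" unfolding W_def by simp
    qed
    then show ?case using k1 by (intro exI[of _ "{1}"]) simp
  next
    case (Suc n)
    then obtain J where J: "J \<subseteq> {1..k}" "card J = Suc n" "Q J" by auto
    have finJ: "finite J" using J(1) finite_subset by blast
    have "J \<noteq> {1..k}" using J(2) Suc.prems by auto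
    then obtain q0 where q0: "q0 \<in> {1..k}" "q0 \<notin> J" using J(1) by blast
    obtain p1 where p1: "p1 \<in> J" using J(2) by (cases "J = {}") auto
    have p1k: "p1 \<in> {1..k}" using p1 J(1) by blast
    obtain x0 where x0: "x0 \<in> Ss p1" using Ss_ne p1k by blast
    obtain v0 where v0: "v0 \<in> Ss q0" using Ss_ne q0 by blast
    define BJ where "BJ = (\<Union>p\<in>J. Bs p)"
    have x0BJ: "x0 \<in> BJ" using x0 SsB[OF p1k] p1 BJ_def by blast
    have conn_ex: "\<exists>q\<in>{1..k}. q \<notin> J \<and> (\<exists>y\<in>BJ. \<exists>z\<in>Bs q. dist_in S E y z \<le> 1)"
    proof (cases "v0 \<in> BJ")
      case True
      have "v0 \<in> S" using v0 SsS[OF q0(1)] by blast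
      then have "dist_in S E v0 v0 \<le> 1" using dist_refl[of v0 S E] by simp
      then show ?thesis using True q0 v0 SsB[OF q0(1)] by blast
    next
      case False
      have "x0 \<in> S" "v0 \<in> S" using x0 v0 SsS[OF p1k] SsS[OF q0(1)] by blast+
      then have "dist_in S E x0 v0 < \<infinity>" using conn unfolding connected_in_def by blast
      from dist_fin_obtain[OF this] obtain xs where xs: "walk_in S E xs" "hd xs = x0" "last xs = v0" by blast
      have ne: "xs \<noteq> []" using xs by (simp add: walk_alt)
      have "xs ! 0 \<in> BJ" using xs(2) ne x0BJ by (simp add: hd_conv_nth)
      moreover have "xs ! (length xs - 1) \<notin> BJ" using xs(3) ne False by (simp add: last_conv_nth)
      ultimately obtain i where i: "i < length xs - 1" "xs ! i \<in> BJ" "xs ! Suc i \<notin> BJ"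
        using discrete_step[of "\<lambda>x. x \<in> BJ" "\<lambda>i. xs ! i" "length xs - 1"] by blast
      have Si: "xs ! Suc i \<in> S" "xs ! i \<in> S" using xs(1) i(1) by (auto simp: walk_alt)
      have Ei: "E (xs ! i) (xs ! Suc i)" using xs(1) i(1) unfolding walk_in_def by blast
      obtain q where q: "q \<in> {1..k}" "xs ! Suc i \<in> Bs q" using SB[OF Si(1)] by blast
      have "q \<notin> J" using q i(3) BJ_def by blast
      moreover have "dist_in S E (xs ! i) (xs ! Suc i) \<le> 1" by (rule dist_edge[of "xs ! i" S "xs ! Suc i" E, OF Si(2) Si(1) Ei])
      ultimately show ?thesis using q i(2) by blast
    qed
    then obtain q y z where q: "q \<in> {1..k}" "q \<notin> J" and y: "y \<in> BJ" and z: "z \<in> Bs q"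
      and yz: "dist_in S E y z \<le> 1" by blast
    obtain py where py: "py \<in> J" "y \<in> Bs py" using y BJ_def by blast
    have cross: "dist_in S E u v + 1 \<le> W (insert q J)" if pu: "p \<in> J" "u \<in> Bs p" and v: "v \<in> Bs q" for p u v
    proof -
      have "dist_in S E u v \<le> dist_in S E u y + dist_in S E y v" by (rule dist_trans)
      also have "\<dots> \<le> dist_in S E u y + (dist_in S E y z + dist_in S E z v)"
        by (rule add_left_mono[OF dist_trans])
      also have "\<dots> \<le> dist_in S E u y + (1 + dist_in S E z v)"
        using yz by (intro add_left_mono add_right_mono)
      finally have "dist_in S E u v + 1 \<le> (dist_in S E u y + 1) + (dist_in S E z v + 1)"
        by (rule ord_le_eq_trans[OF add_right_mono]) (simp add: ac_simps)
      also have "\<dots> \<le> W J + (diam E (Ss q) + enat (2 * a + 1))"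
      proof (rule add_mono)
        show "dist_in S E u y + 1 \<le> W J" using J(3) pu py unfolding Q_def by blast
        show "dist_in S E z v + 1 \<le> diam E (Ss q) + enat (2 * a + 1)" by (rule base[OF q(1) z v])
      qed
      also have "\<dots> = W (insert q J)" using Wins[OF finJ q(2)] by (simp add: ac_simps)
      finally show ?thesis .
    qed
    have "Q (insert q J)" unfolding Q_def
    proof (intro ballI)
      fix p1 p2 u v assume p12: "p1 \<in> insert q J" "p2 \<in> insert q J" "u \<in> Bs p1" "v \<in> Bs p2"
      have fin2: "finite (insert q J)" using finJ by simp
      show "dist_in S E u v + 1 \<le> W (insert q J)"
      proof (cases "p1 = q")
        case True
        show ?thesis
        proof (cases "p2 = q")
          case True
          have "dist_in S E u v + 1 \<le> diam E (Ss q) + enat (2 * a + 1)"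
            using base[OF q(1)] p12 \<open>p1 = q\<close> True by blast
          also have "\<dots> \<le> W (insert q J)" by (rule Wmem[OF fin2]) simp
          finally show ?thesis .
        next
          case False
          then have "p2 \<in> J" using p12 by blast
          then have "dist_in S E v u + 1 \<le> W (insert q J)" using cross p12 \<open>p1 = q\<close> by blast
          then show ?thesis using dist_sym_eq[OF sym, of S u v] by simp
        qed
      next
        case False
        then have p1J: "p1 \<in> J" using p12 by blast
        show ?thesis
        proof (cases "p2 = q")
          case True
          then show ?thesis using cross p1J p12 by blast
        next
          case False
          then have "p2 \<in> J" using p12 by blast
          then have "dist_in S E u v + 1 \<le> W J" using J(3) p1J p12 unfolding Q_def by blast
          also have "\<dots> \<le> W (insert q J)" by (rule Wmono[OF fin2]) blast
          finally show ?thesis .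
        qed
      qed
    qed
    moreover have "insert q J \<subseteq> {1..k}" using q J(1) by blast
    moreover have "card (insert q J) = Suc (Suc n)" using J(2) finJ q(2) by simp
    ultimately show ?case by blast
  qed
  obtain J where J: "J \<subseteq> {1..k}" "card J = k" "Q J" using step[of "k - 1"] k1 by auto
  have "J = {1..k}" using J(1,2) by (intro card_subset_eq) simp_all
  with J(3) have Qall: "Q {1..k}" by simp
  have all: "dist_in S E u v + 1 \<le> W {1..k}" if "u \<in> S" "v \<in> S" for u v
    using Qall SB[OF that(1)] SB[OF that(2)] unfolding Q_def by blast
  show ?thesis
  proof (cases "W {1..k}")
    case infinity
    then show ?thesis unfolding W_def by simp
  next
    case (enat w)
    have "dist_in S E u0 u0 + 1 \<le> enat w" using all[OF u0 u0] enat by simp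
    then have w1: "1 \<le> w" using dist_refl[OF u0, of E] by (simp add: one_enat_def)
    have "dist_in S E u v \<le> enat (w - 1)" if "u \<in> S" "v \<in> S" for u v
    proof -
      have h: "dist_in S E u v + 1 \<le> enat w" using all[OF that] enat by simp
      then show ?thesis using w1 by (cases "dist_in S E u v") (simp_all add: one_enat_def)
    qed
    then have "diam E S \<le> enat (w - 1)" unfolding diam_def by (intro SUP_least) blast
    then have "diam E S + 1 \<le> enat (w - 1) + 1" by (rule add_right_mono)
    also have "\<dots> = enat w" using w1 by (simp add: one_enat_def)
    finally show ?thesis using enat unfolding W_def by simp
  qed
qed

theorem lemmaB7:
  fixes V :: "'a set" and E :: "'a \<Rightarrow> 'a \<Rightarrow> bool" and a k :: nat
    and VD :: "'a set" and Ss :: "nat \<Rightarrow> 'a set"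
  assumes G: "graph V E"
    and a_pos: "a > 0"
    and VD_sub: "VD \<subseteq> V"
    and Ss_sub: "\<forall>i \<in> {1..k}. Ss i \<subseteq> V"
    and Ss_ne: "\<forall>i \<in> {1..k}. Ss i \<noteq> {}"
    and Ss_disj: "\<forall>i \<in> {1..k}. \<forall>j \<in> {1..k}. i \<noteq> j \<longrightarrow> Ss i \<inter> Ss j = {}"
    and sep: "\<forall>u \<in> VD. (\<exists>i \<in> {1..k}. nbhd V E a u \<subseteq> Ss i)
                  \<or> nbhd V E a u \<inter> (\<Union>i \<in> {1..k}. Ss i) = {}"
    and S_def: "S = {v \<in> V. set_dist V E v (\<Union>i \<in> {1..k}. Ss i) \<le> enat a}"
    and conn: "connected_in E S"
  shows "pack_num V E VD a S = (\<Sum>i = 1..k. pack_num V E VD a (Ss i))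
       \<and> diam E S + 1 \<le> (\<Sum>i = 1..k. diam E (Ss i) + enat (2 * a + 1))"
    using part1[OF G VD_sub Ss_sub Ss_disj sep S_def] part2[OF G Ss_sub Ss_ne S_def conn] by simp

end
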